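(* Neither the forgetful functor $\mathbf{ubal}\to\mathsf{Set}$ nor the forgetful functor $\mathbf{balg}\to\mathsf{Set}$ has a left adjoint.
   Context: All rings are commutative and unital. An $\ell$-algebra is a commutative unital $\mathbb{R}$-algebra $A$ with a partial order $\le$ making $(A,\le)$ a lattice, such that $a\le b$ implies $a+c\le b+c$, $0\le a,b$ implies $0\le ab$, and $0\le a$, $0\le r\in\mathbb{R}$ imply $0\le r\cdot a$. $A$ is bounded if for each $a$ there is $n\in\mathbb{N}$ with $a\le n\cdot1$, archimedean if $n\cdot a\le b$ for all $n$ implies $a\le0$. $\mathbf{bal}$ is the category of bounded archimedean $\ell$-algebras and unital $\ell$-algebra homomorphisms. For $A\in\mathbf{bal}$, $|a|=a\vee(-a)$ and $\|a\|=\inf\{r\in\mathbb{R}\mid |a|\le r\cdot1\}$; $A$ is uniformly complete if it is complete with respect to this norm, and $\mathbf{ubal}$ is the full subcategory of uniformly complete objects. An $\ell$-algebra is Dedekind complete if every subset bounded above has a least upper bound. The idempotents $\mathrm{Id}(A)$ of a commutative ring form a boolean algebra with $e\vee f=e+f-ef$, $e\wedge f=ef$, $\neg e=1-e$. A basic algebra is a Dedekind complete $A\in\mathbf{bal}$ with $\mathrm{Id}(A)$ atomic. A normal homomorphism between basic algebras is a $\mathbf{bal}$-morphism preserving all existing joins and meets. $\mathbf{balg}$ is the category of basic algebras and normal homomorphisms. *)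

theory Defs
  imports Complex_Main
begin

record 'a lalg =
  carrier :: "'a set"
  zero :: 'a
  one :: 'a
  add :: "'a \<Rightarrow> 'a \<Rightarrow> 'a"
  neg :: "'a \<Rightarrow> 'a"
  mul :: "'a \<Rightarrow> 'a \<Rightarrow> 'a"
  smul :: "real \<Rightarrow> 'a \<Rightarrow> 'a"
  le :: "'a \<Rightarrow> 'a \<Rightarrow> bool"

definition comm_ralg :: "'a lalg \<Rightarrow> bool" where
  "comm_ralg A \<longleftrightarrow>
     zero A \<in> carrier A \<and> one A \<in> carrier A \<and>
     (\<forall>a\<in>carrier A. \<forall>b\<in>carrier A. add A a b \<in> carrier A \<and> mul A a b \<in> carrier A) \<and>
     (\<forall>a\<in>carrier A. neg A a \<in> carrier A) \<and>
     (\<forall>r. \<forall>a\<in>carrier A. smul A r a \<in> carrier A) \<and>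
     (\<forall>a\<in>carrier A. \<forall>b\<in>carrier A. \<forall>c\<in>carrier A.
        add A (add A a b) c = add A a (add A b c) \<and>
        mul A (mul A a b) c = mul A a (mul A b c) \<and>
        mul A a (add A b c) = add A (mul A a b) (mul A a c)) \<and>
     (\<forall>a\<in>carrier A. \<forall>b\<in>carrier A. add A a b = add A b a \<and> mul A a b = mul A b a) \<and>
     (\<forall>a\<in>carrier A. add A a (zero A) = a \<and> add A a (neg A a) = zero A \<and>
        mul A a (one A) = a) \<and>
     (\<forall>r s. \<forall>a\<in>carrier A. \<forall>b\<in>carrier A.
        smul A r (add A a b) = add A (smul A r a) (smul A r b) \<and>
        smul A (r + s) a = add A (smul A r a) (smul A s a) \<and>
        smul A (r * s) a = smul A r (smul A s a) \<and>
        smul A r (mul A a b) = mul A (smul A r a) b) \<and>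
     (\<forall>a\<in>carrier A. smul A 1 a = a)"

definition is_lub :: "'a lalg \<Rightarrow> 'a set \<Rightarrow> 'a \<Rightarrow> bool" where
  "is_lub A S s \<longleftrightarrow> s \<in> carrier A \<and> (\<forall>x\<in>S. le A x s) \<and>
     (\<forall>u\<in>carrier A. (\<forall>x\<in>S. le A x u) \<longrightarrow> le A s u)"

definition is_glb :: "'a lalg \<Rightarrow> 'a set \<Rightarrow> 'a \<Rightarrow> bool" where
  "is_glb A S s \<longleftrightarrow> s \<in> carrier A \<and> (\<forall>x\<in>S. le A s x) \<and>
     (\<forall>u\<in>carrier A. (\<forall>x\<in>S. le A u x) \<longrightarrow> le A u s)"

definition ljoin :: "'a lalg \<Rightarrow> 'a \<Rightarrow> 'a \<Rightarrow> 'a" where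
  "ljoin A a b = (THE s. is_lub A {a, b} s)"

definition lmeet :: "'a lalg \<Rightarrow> 'a \<Rightarrow> 'a \<Rightarrow> 'a" where
  "lmeet A a b = (THE s. is_glb A {a, b} s)"

definition l_algebra :: "'a lalg \<Rightarrow> bool" where
  "l_algebra A \<longleftrightarrow> comm_ralg A \<and>
     (\<forall>a\<in>carrier A. le A a a) \<and>
     (\<forall>a\<in>carrier A. \<forall>b\<in>carrier A. le A a b \<and> le A b a \<longrightarrow> a = b) \<and>
     (\<forall>a\<in>carrier A. \<forall>b\<in>carrier A. \<forall>c\<in>carrier A. le A a b \<and> le A b c \<longrightarrow> le A a c) \<and>
     (\<forall>a\<in>carrier A. \<forall>b\<in>carrier A. (\<exists>s. is_lub A {a, b} s) \<and> (\<exists>s. is_glb A {a, b} s)) \<and>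
     (\<forall>a\<in>carrier A. \<forall>b\<in>carrier A. \<forall>c\<in>carrier A. le A a b \<longrightarrow> le A (add A a c) (add A b c)) \<and>
     (\<forall>a\<in>carrier A. \<forall>b\<in>carrier A. le A (zero A) a \<and> le A (zero A) b \<longrightarrow> le A (zero A) (mul A a b)) \<and>
     (\<forall>a\<in>carrier A. \<forall>r::real. le A (zero A) a \<and> 0 \<le> r \<longrightarrow> le A (zero A) (smul A r a))"

definition bounded_lalg :: "'a lalg \<Rightarrow> bool" where
  "bounded_lalg A \<longleftrightarrow> (\<forall>a\<in>carrier A. \<exists>n::nat. le A a (smul A (real n) (one A)))"

definition archimedean_lalg :: "'a lalg \<Rightarrow> bool" where
  "archimedean_lalg A \<longleftrightarrow> (\<forall>a\<in>carrier A. \<forall>b\<in>carrier A.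
     (\<forall>n::nat. le A (smul A (real n) a) b) \<longrightarrow> le A a (zero A))"

definition bal :: "'a lalg \<Rightarrow> bool" where
  "bal A \<longleftrightarrow> l_algebra A \<and> bounded_lalg A \<and> archimedean_lalg A"

definition labs :: "'a lalg \<Rightarrow> 'a \<Rightarrow> 'a" where
  "labs A a = ljoin A a (neg A a)"

definition lnorm :: "'a lalg \<Rightarrow> 'a \<Rightarrow> real" where
  "lnorm A a = Inf {r::real. le A (labs A a) (smul A r (one A))}"

definition uniformly_complete :: "'a lalg \<Rightarrow> bool" where
  "uniformly_complete A \<longleftrightarrow> (\<forall>s::nat \<Rightarrow> 'a. range s \<subseteq> carrier A \<longrightarrow>
     (\<forall>e>0. \<exists>N. \<forall>m\<ge>N. \<forall>n\<ge>N. lnorm A (add A (s m) (neg A (s n))) < e) \<longrightarrow>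
     (\<exists>a\<in>carrier A. (\<lambda>n. lnorm A (add A (s n) (neg A a))) \<longlonglongrightarrow> 0))"

definition ubal :: "'a lalg \<Rightarrow> bool" where
  "ubal A \<longleftrightarrow> bal A \<and> uniformly_complete A"

definition dedekind_complete :: "'a lalg \<Rightarrow> bool" where
  "dedekind_complete A \<longleftrightarrow> (\<forall>S. S \<subseteq> carrier A \<and> S \<noteq> {} \<and>
     (\<exists>u\<in>carrier A. \<forall>x\<in>S. le A x u) \<longrightarrow> (\<exists>s. is_lub A S s))"

definition idems :: "'a lalg \<Rightarrow> 'a set" where
  "idems A = {e \<in> carrier A. mul A e e = e}"

text \<open>In the boolean algebra of idempotents, e \<le> f iff ef = e.\<close>
definition idem_atom :: "'a lalg \<Rightarrow> 'a \<Rightarrow> bool" where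
  "idem_atom A a \<longleftrightarrow> a \<in> idems A \<and> a \<noteq> zero A \<and>
     (\<forall>e\<in>idems A. mul A e a = e \<longrightarrow> e = zero A \<or> e = a)"

definition idems_atomic :: "'a lalg \<Rightarrow> bool" where
  "idems_atomic A \<longleftrightarrow> (\<forall>e\<in>idems A. e \<noteq> zero A \<longrightarrow>
     (\<exists>a. idem_atom A a \<and> mul A a e = a))"

text \<open>Objects of balg: basic algebras.\<close>
definition basic_algebra :: "'a lalg \<Rightarrow> bool" where
  "basic_algebra A \<longleftrightarrow> bal A \<and> dedekind_complete A \<and> idems_atomic A"

text \<open>Morphisms of bal (and ubal): unital l-algebra homomorphisms.\<close>
definition bal_hom :: "'a lalg \<Rightarrow> 'b lalg \<Rightarrow> ('a \<Rightarrow> 'b) \<Rightarrow> bool" where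
  "bal_hom A B h \<longleftrightarrow> h ` carrier A \<subseteq> carrier B \<and>
     h (one A) = one B \<and>
     (\<forall>a\<in>carrier A. \<forall>b\<in>carrier A.
        h (add A a b) = add B (h a) (h b) \<and>
        h (mul A a b) = mul B (h a) (h b) \<and>
        h (ljoin A a b) = ljoin B (h a) (h b) \<and>
        h (lmeet A a b) = lmeet B (h a) (h b)) \<and>
     (\<forall>r. \<forall>a\<in>carrier A. h (smul A r a) = smul B r (h a))"

text \<open>Morphisms of balg: normal homomorphisms.\<close>
definition normal_hom :: "'a lalg \<Rightarrow> 'b lalg \<Rightarrow> ('a \<Rightarrow> 'b) \<Rightarrow> bool" where
  "normal_hom A B h \<longleftrightarrow> bal_hom A B h \<and>
     (\<forall>S s. S \<subseteq> carrier A \<and> is_lub A S s \<longrightarrow> is_lub B (h ` S) (h s)) \<and>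
     (\<forall>S s. S \<subseteq> carrier A \<and> is_glb A S s \<longrightarrow> is_glb B (h ` S) (h s))"

text \<open>(F, eta) is a universal arrow from the set X to the forgetful functor of
  the category with objects Obj and morphisms Hom, tested against all objects
  whose carrier lies in the type of the test objects.\<close>
definition universal_arrow ::
  "('a lalg \<Rightarrow> bool) \<Rightarrow> ('b lalg \<Rightarrow> bool) \<Rightarrow> ('a lalg \<Rightarrow> 'b lalg \<Rightarrow> ('a \<Rightarrow> 'b) \<Rightarrow> bool)
     \<Rightarrow> 'x set \<Rightarrow> 'a lalg \<Rightarrow> ('x \<Rightarrow> 'a) \<Rightarrow> bool" where
  "universal_arrow ObjF ObjB Hom X F eta \<longleftrightarrow> ObjF F \<and> eta ` X \<subseteq> carrier F \<and>
     (\<forall>B f. ObjB B \<and> f ` X \<subseteq> carrier B \<longrightarrow>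
        (\<exists>g. Hom F B g \<and> (\<forall>x\<in>X. g (eta x) = f x)) \<and>
        (\<forall>g1 g2. Hom F B g1 \<and> Hom F B g2 \<and> (\<forall>x\<in>X. g1 (eta x) = f x) \<and>
           (\<forall>x\<in>X. g2 (eta x) = f x) \<longrightarrow> (\<forall>a\<in>carrier F. g1 a = g2 a)))"

end

theory Submission
  imports Defs
begin

definition RR :: "real lalg" where
  "RR = \<lparr>carrier = UNIV, zero = 0, one = 1, add = (+), neg = uminus, mul = (*),
         smul = (*), le = (\<le>)\<rparr>"

lemma RR_simps[simp]: "carrier RR = UNIV" "zero RR = 0" "one RR = 1" "add RR = (+)"
  "neg RR = uminus" "mul RR = (*)" "smul RR = (*)" "le RR = (\<le>)"
  by (simp_all add: RR_def)

lemma RR_lub: "is_lub RR {a, b} s \<longleftrightarrow> s = max a b"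
  unfolding is_lub_def by (auto simp: max_def)

lemma RR_glb: "is_glb RR {a, b} s \<longleftrightarrow> s = min a b"
  unfolding is_glb_def by (auto simp: min_def intro: antisym)

lemma RR_join[simp]: "ljoin RR a b = max a b"
  unfolding ljoin_def RR_lub by simp

lemma RR_bal: "bal RR"
  unfolding bal_def l_algebra_def bounded_lalg_def archimedean_lalg_def
proof (intro conjI)
  show "\<forall>a\<in>carrier RR. \<exists>n::nat. le RR a (smul RR (real n) (one RR))"
    by (simp add: real_arch_simple)
  show "\<forall>a\<in>carrier RR. \<forall>b\<in>carrier RR.
     (\<forall>n::nat. le RR (smul RR (real n) a) b) \<longrightarrow> le RR a (zero RR)"
  proof (intro ballI impI)
    fix a b :: real assume h: "\<forall>n::nat. le RR (smul RR (real n) a) b"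
    show "le RR a (zero RR)"
    proof (rule ccontr)
      assume "\<not> le RR a (zero RR)" hence "a > 0" by simp
      then obtain n where "b < real n * a" using ex_less_of_nat_mult by blast
      with h show False by (simp add: not_le[symmetric])
    qed
  qed
next
  show "comm_ralg RR" unfolding comm_ralg_def by (simp add: algebra_simps)
next
  show "\<forall>a\<in>carrier RR. \<forall>b\<in>carrier RR. (\<exists>s. is_lub RR {a, b} s) \<and> (\<exists>s. is_glb RR {a, b} s)"
    by (simp add: RR_lub RR_glb)
qed (simp_all add: mult_nonneg_nonneg)

lemma RR_ubal: "ubal RR"
  unfolding ubal_def
proof (intro conjI RR_bal)
  have ln: "lnorm RR a = \<bar>a\<bar>" for a
  proof -
    have "{r::real. max a (- a) \<le> r} = {\<bar>a\<bar>..}" by (auto simp: abs_if)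
    thus ?thesis unfolding lnorm_def labs_def by simp
  qed
  show "uniformly_complete RR"
    unfolding uniformly_complete_def ln
  proof (intro allI impI)
    fix s :: "nat \<Rightarrow> real"
    assume "\<forall>e>0. \<exists>N. \<forall>m\<ge>N. \<forall>n\<ge>N. \<bar>add RR (s m) (neg RR (s n))\<bar> < e"
    hence "Cauchy s" by (intro metric_CauchyI) (simp add: dist_real_def)
    then obtain L where "s \<longlonglongrightarrow> L" using Cauchy_convergent_iff convergent_def by blast
    hence "(\<lambda>n. \<bar>s n - L\<bar>) \<longlonglongrightarrow> 0"
      using LIM_zero tendsto_rabs_zero by blast
    thus "\<exists>a\<in>carrier RR. (\<lambda>n. \<bar>add RR (s n) (neg RR a)\<bar>) \<longlonglongrightarrow> 0" by auto
  qed
qed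

lemma RR_basic: "basic_algebra RR"
  unfolding basic_algebra_def
proof (intro conjI RR_bal)
  show "dedekind_complete RR"
    unfolding dedekind_complete_def
  proof (intro allI impI)
    fix S :: "real set" assume h: "S \<subseteq> carrier RR \<and> S \<noteq> {} \<and> (\<exists>u\<in>carrier RR. \<forall>x\<in>S. le RR x u)"
    hence "bdd_above S" by (auto simp: bdd_above_def)
    with h have "is_lub RR S (Sup S)"
      unfolding is_lub_def by (auto intro: cSup_upper cSup_least)
    thus "\<exists>s. is_lub RR S s" by blast
  qed
  have id: "idems RR = {0, 1}" unfolding idems_def by auto
  show "idems_atomic RR"
    unfolding idems_atomic_def idem_atom_def id
    by (rule ballI, rule impI, rule exI[of _ 1]) auto
qed

lemma lub_le:
  assumes "l_algebra F" "a \<in> carrier F" "b \<in> carrier F" "le F a b"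
  shows "ljoin F a b = b"
proof -
  have refl: "\<forall>a\<in>carrier F. le F a a"
    using assms(1) unfolding l_algebra_def by (elim conjE) assumption
  have anti: "\<forall>a\<in>carrier F. \<forall>b\<in>carrier F. le F a b \<and> le F b a \<longrightarrow> a = b"
    using assms(1) unfolding l_algebra_def by (elim conjE) assumption
  have ex: "is_lub F {a, b} b" unfolding is_lub_def
  proof (intro conjI ballI impI)
    show "b \<in> carrier F" by (rule assms(3))
    fix x assume "x \<in> {a, b}" thus "le F x b" using assms(4) refl assms(3) by blast
  next
    fix u assume "u \<in> carrier F" "\<forall>x\<in>{a, b}. le F x u" thus "le F b u" by blast
  qed
  show ?thesis unfolding ljoin_def
  proof (rule the_equality[where P="is_lub F {a, b}", OF ex])
    fix s assume s: "is_lub F {a, b} s"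
    have s1: "s \<in> carrier F" using s unfolding is_lub_def by (elim conjE) assumption
    have s2: "\<forall>x\<in>{a,b}. le F x s" using s unfolding is_lub_def by (elim conjE) assumption
    have "\<forall>u\<in>carrier F. (\<forall>x\<in>{a,b}. le F x u) \<longrightarrow> le F b u" using ex unfolding is_lub_def by (elim conjE) assumption
    hence "le F b s" using s1 s2 by blast
    moreover have "le F s b"
    proof -
      have s3: "\<forall>u\<in>carrier F. (\<forall>x\<in>{a,b}. le F x u) \<longrightarrow> le F s u"
        using s unfolding is_lub_def by (elim conjE) assumption
      have e2: "\<forall>x\<in>{a,b}. le F x b" using ex unfolding is_lub_def by (elim conjE) assumption
      show ?thesis using s3 e2 assms(3) by blast
    qed
    ultimately have "s \<in> carrier F" "le F b s" "le F s b" using s1 by auto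
    thus "s = b" using anti assms(3) by blast
  qed
qed

lemma no_ua:
  assumes F: "bal F" and x: "x \<in> X" and eta: "eta ` X \<subseteq> carrier F"
    and ex: "\<And>f. \<exists>g. bal_hom F RR g \<and> (\<forall>x\<in>X. g (eta x) = f x)"
  shows False
proof -
  have ex_in: "eta x \<in> carrier F" using x eta by auto
  have bd: "\<forall>a\<in>carrier F. \<exists>n::nat. le F a (smul F (real n) (one F))"
    using F unfolding bal_def bounded_lalg_def by simp
  obtain n :: nat where n: "le F (eta x) (smul F (real n) (one F))"
    using bd ex_in by blast
  obtain g where g: "bal_hom F RR g" and gx: "\<forall>y\<in>X. g (eta y) = real n + 1"
    using ex[of "\<lambda>_. real n + 1"] by blast
  have la: "l_algebra F" using F by (simp add: bal_def)
  hence c: "comm_ralg F" by (simp add: l_algebra_def)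
  have one: "one F \<in> carrier F"
    using c unfolding comm_ralg_def by (elim conjE) assumption
  have smc: "\<forall>r. \<forall>a\<in>carrier F. smul F r a \<in> carrier F"
    using c unfolding comm_ralg_def by (elim conjE) assumption
  have sm: "smul F (real n) (one F) \<in> carrier F" using smc one by blast
  have j: "ljoin F (eta x) (smul F (real n) (one F)) = smul F (real n) (one F)"
    by (rule lub_le[OF la ex_in sm n])
  have g1: "g (one F) = one RR"
    using g unfolding bal_hom_def by (elim conjE) assumption
  have gs: "\<forall>r. \<forall>a\<in>carrier F. g (smul F r a) = smul RR r (g a)"
    using g unfolding bal_hom_def by (elim conjE) assumption
  have gall: "\<forall>a\<in>carrier F. \<forall>b\<in>carrier F.
        g (add F a b) = add RR (g a) (g b) \<and>
        g (mul F a b) = mul RR (g a) (g b) \<and>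
        g (ljoin F a b) = ljoin RR (g a) (g b) \<and>
        g (lmeet F a b) = lmeet RR (g a) (g b)"
    using g unfolding bal_hom_def by (elim conjE) assumption
  have gj: "g (ljoin F a b) = ljoin RR (g a) (g b)" if "a \<in> carrier F" "b \<in> carrier F" for a b
    using gall that by blast
  have "g (ljoin F (eta x) (smul F (real n) (one F)))
        = max (g (eta x)) (g (smul F (real n) (one F)))"
    using gj ex_in sm by simp
  moreover have "g (smul F (real n) (one F)) = real n"
    using gs g1 one by simp
  ultimately have "max (real n + 1) (real n) = real n" using j gx x by simp
  thus False by simp
qed

lemma ua_unfold:
  assumes "universal_arrow ObjF ObjB Hom X F eta" "ObjB B"
  shows "ObjF F" "eta ` X \<subseteq> carrier F"
    "f ` X \<subseteq> carrier B \<Longrightarrow> \<exists>g. Hom F B g \<and> (\<forall>x\<in>X. g (eta x) = f x)"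
  using assms unfolding universal_arrow_def by blast+

theorem mainTheorem3:
  shows "\<not> (\<forall>X::'x set. \<exists>(F::'a lalg) eta.
             universal_arrow ubal (ubal :: real lalg \<Rightarrow> bool) bal_hom X F eta)
       \<and> \<not> (\<forall>X::'x set. \<exists>(F::'b lalg) eta.
             universal_arrow basic_algebra (basic_algebra :: real lalg \<Rightarrow> bool) normal_hom X F eta)"
proof (intro conjI notI)
  assume "\<forall>X::'x set. \<exists>(F::'a lalg) eta.
             universal_arrow ubal (ubal :: real lalg \<Rightarrow> bool) bal_hom X F eta"
  then obtain F :: "'a lalg" and eta where u: "universal_arrow ubal (ubal :: real lalg \<Rightarrow> bool) bal_hom (UNIV::'x set) F eta"
    by blast
  note U = ua_unfold[OF u RR_ubal]
  show False
  proof (rule no_ua[of F "undefined::'x" UNIV eta])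
    show "bal F" using U(1) unfolding ubal_def by (elim conjE)
    show "eta ` UNIV \<subseteq> carrier F" by (rule U(2))
    fix f :: "'x \<Rightarrow> real"
    show "\<exists>g. bal_hom F RR g \<and> (\<forall>x\<in>UNIV. g (eta x) = f x)"
      by (rule U(3)) simp
  qed simp
next
  assume "\<forall>X::'x set. \<exists>(F::'b lalg) eta.
             universal_arrow basic_algebra (basic_algebra :: real lalg \<Rightarrow> bool) normal_hom X F eta"
  then obtain F :: "'b lalg" and eta where u: "universal_arrow basic_algebra (basic_algebra :: real lalg \<Rightarrow> bool) normal_hom (UNIV::'x set) F eta"
    by blast
  note U = ua_unfold[OF u RR_basic]
  show False
  proof (rule no_ua[of F "undefined::'x" UNIV eta])
    show "bal F" using U(1) unfolding basic_algebra_def by (elim conjE)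
    show "eta ` UNIV \<subseteq> carrier F" by (rule U(2))
    fix f :: "'x \<Rightarrow> real"
    obtain g where "normal_hom F RR g" "\<forall>x\<in>UNIV. g (eta x) = f x"
      using U(3)[of f] by auto
    moreover from this(1) have "bal_hom F RR g" unfolding normal_hom_def by (elim conjE)
    ultimately show "\<exists>g. bal_hom F RR g \<and> (\<forall>x\<in>UNIV. g (eta x) = f x)"
      by blast
  qed simp
qed

end
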